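(* Let $R,Q,S$ be rod sets. The following are equivalent: (1) $R\xrightarrow{Q}S$; (2) $D(n,R,S)=C(n,Q)$ for all $n>0$; (3) $\langle\mathrm{Trains}(R)\rangle\equiv\langle\mathrm{Trains}(S)\rangle\cup Q\cup\langle\mathrm{Trains}(S)\rangle Q$; (4) for all $n>0$, $F(n,R)=F(n,S)+\sum_{q\in Q}(\operatorname{sign}q)F(n-\operatorname{len}q,S)$.
   Context: A rod is a triple $(r,c,\varepsilon)$ with $r$ a positive integer (length), $c$ a tag (color), $\varepsilon\in\{\pm1\}$ (sign); antirods have sign $-1$. A rod set is a set of rods with finitely many of each length. A train built from $R$ is a finite sequence of rods of $R$ (including the empty train), with length the sum of lengths and sign the product of signs; $\mathrm{Trains}(R)$ is the set of such trains, and $\langle\mathrm{Trains}(R)\rangle$ is the rod set with one rod, of the same length and sign, for each nonempty train. $F(n,R)$ is the number of positive trains of length $n$ minus the number of negative ones, with $F(0,R)=1$, $F(n,R)=0$ for $n<0$. $C(n,R)$ = (number of positive rods of length $n$) $-$ (number of antirods of length $n$); $R\equiv S$ means $C(n,R)=C(n,S)$ for all $n>0$. Unions are disjoint unions; $\overline{Q}$ reverses all signs; $QR$ has one rod per pair $(q,r)\in Q\times R$, of length $\operatorname{len}q+\operatorname{len}r$ and sign $\operatorname{sign}q\operatorname{sign}r$. $R\xrightarrow{Q}S$ means $S\equiv R\cup\overline{Q}\cup QR$. The discrepancy is $D(n,R,S)=F(n,R)-\sum_{k\in S}(\operatorname{sign}k)F(n-\operatorname{len}k,R)$. *)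

theory Defs
  imports Main
begin

type_synonym 'c rod = "nat \<times> 'c \<times> int"

definition rlen :: "'c rod \<Rightarrow> nat" where "rlen k = fst k"
definition rcol :: "'c rod \<Rightarrow> 'c" where "rcol k = fst (snd k)"
definition rsign :: "'c rod \<Rightarrow> int" where "rsign k = snd (snd k)"

definition is_rodset :: "'c rod set \<Rightarrow> bool" where
  "is_rodset R \<longleftrightarrow> (\<forall>k\<in>R. rlen k > 0 \<and> (rsign k = 1 \<or> rsign k = -1))
                  \<and> (\<forall>n. finite {k\<in>R. rlen k = n})"

definition Trains :: "'c rod set \<Rightarrow> 'c rod list set" where
  "Trains R = lists R"

definition tlen :: "'c rod list \<Rightarrow> nat" where "tlen t = sum_list (map rlen t)"
definition tsign :: "'c rod list \<Rightarrow> int" where "tsign t = prod_list (map rsign t)"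

definition F :: "int \<Rightarrow> 'c rod set \<Rightarrow> int" where
  "F n R = (if n < 0 then 0 else (\<Sum>t\<in>{t\<in>Trains R. tlen t = nat n}. tsign t))"

definition C :: "nat \<Rightarrow> 'c rod set \<Rightarrow> int" where
  "C n R = int (card {k\<in>R. rlen k = n \<and> rsign k = 1}) - int (card {k\<in>R. rlen k = n \<and> rsign k = -1})"

definition rod_equiv :: "'c rod set \<Rightarrow> 'd rod set \<Rightarrow> bool" where
  "rod_equiv R S \<longleftrightarrow> (\<forall>n>0. C n R = C n S)"

text \<open>\<langle>Trains(R)\<rangle>: one rod (same length and sign) per nonempty train, tagged by the train.\<close>
definition train_rods :: "'c rod set \<Rightarrow> ('c rod list) rod set" where
  "train_rods R = {(tlen t, t, tsign t) | t. t \<in> Trains R \<and> t \<noteq> []}"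

definition rod_union :: "'c rod set \<Rightarrow> 'd rod set \<Rightarrow> ('c + 'd) rod set" where
  "rod_union R S = {(r, Inl c, e) | r c e. (r, c, e) \<in> R} \<union> {(r, Inr c, e) | r c e. (r, c, e) \<in> S}"

definition rod_bar :: "'c rod set \<Rightarrow> 'c rod set" where
  "rod_bar Q = {(r, c, - e) | r c e. (r, c, e) \<in> Q}"

definition rod_prod :: "'c rod set \<Rightarrow> 'd rod set \<Rightarrow> ('c rod \<times> 'd rod) rod set" where
  "rod_prod Q R = {(rlen q + rlen r, (q, r), rsign q * rsign r) | q r. q \<in> Q \<and> r \<in> R}"

definition rod_arrow :: "'a rod set \<Rightarrow> 'b rod set \<Rightarrow> 'c rod set \<Rightarrow> bool" where
  "rod_arrow R Q S \<longleftrightarrow> rod_equiv S (rod_union (rod_union R (rod_bar Q)) (rod_prod Q R))"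

text \<open>Discrepancy D(n,R,S); only rods with len k \<le> n contribute (F vanishes at negative arguments),
  so the sum is restricted to that finite set.\<close>
definition D :: "nat \<Rightarrow> 'a rod set \<Rightarrow> 'b rod set \<Rightarrow> int" where
  "D n R S = F (int n) R - (\<Sum>k\<in>{k\<in>S. rlen k \<le> n}. rsign k * F (int n - int (rlen k)) R)"

end

theory Submission
  imports Defs "HOL-Computational_Algebra.Formal_Power_Series"
begin

definition fib :: "'c rod set \<Rightarrow> nat \<Rightarrow> 'c rod set" where "fib A n = {k\<in>A. rlen k = n}"
definition sig :: "'c rod set \<Rightarrow> nat \<Rightarrow> int" where "sig A n = (\<Sum>k\<in>fib A n. rsign k)"
definition cf :: "'c rod set \<Rightarrow> int fps" where "cf A = Abs_fps (sig A)"
definition TT :: "'c rod set \<Rightarrow> nat \<Rightarrow> 'c rod list set" where "TT R n = {t\<in>lists R. tlen t = n}"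
definition Fs :: "'c rod set \<Rightarrow> int fps" where "Fs R = Abs_fps (\<lambda>n. F (int n) R)"

lemma rodset_fin: "is_rodset A \<Longrightarrow> finite (fib A n)"
  by (simp add: is_rodset_def fib_def)

lemma C_sig: assumes A: "is_rodset A" shows "C n A = sig A n"
proof -
  let ?P = "{k\<in>A. rlen k = n \<and> rsign k = 1}" and ?N = "{k\<in>A. rlen k = n \<and> rsign k = -1}"
  have fin: "finite (fib A n)" using A by (rule rodset_fin)
  have eq: "fib A n = ?P \<union> ?N" using A by (auto simp: fib_def is_rodset_def)
  have fP: "finite ?P" "finite ?N" using fin by (auto simp: fib_def elim: rev_finite_subset)
  have "sig A n = sum rsign ?P + sum rsign ?N" unfolding sig_def eq
    by (rule sum.union_disjoint) (use fP in auto)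
  also have "sum rsign ?P = int (card ?P)" by simp
  also have "sum rsign ?N = - int (card ?N)" by simp
  finally show ?thesis by (simp add: C_def)
qed

lemma sig0: assumes "is_rodset A" shows "sig A 0 = 0"
proof -
  have "fib A 0 = {}" using assms by (auto simp: fib_def is_rodset_def)
  then show ?thesis by (simp add: sig_def)
qed

lemma fin_le: assumes A: "is_rodset A" shows "finite {k\<in>A. rlen k \<le> n}"
proof -
  have "{k\<in>A. rlen k \<le> n} \<subseteq> (\<Union>m\<in>{0..n}. fib A m)" by (auto simp: fib_def)
  moreover have "finite (\<Union>m\<in>{0..n}. fib A m)" using rodset_fin[OF A] by auto
  ultimately show ?thesis by (rule finite_subset)
qed

lemma group_len: assumes A: "is_rodset A"
  shows "(\<Sum>k\<in>{k\<in>A. rlen k \<le> n}. rsign k * g (rlen k)) = (\<Sum>m=0..n. sig A m * g m)"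
proof -
  have "(\<Sum>k\<in>{k\<in>A. rlen k \<le> n}. rsign k * g (rlen k))
     = (\<Sum>m\<in>{0..n}. \<Sum>k\<in>{x. x\<in>{k\<in>A. rlen k \<le> n} \<and> rlen x = m}. rsign k * g (rlen k))"
    by (rule sum.group[symmetric]) (use fin_le[OF A] in auto)
  also have "\<dots> = (\<Sum>m=0..n. sig A m * g m)"
  proof (rule sum.cong)
    fix m assume "m \<in> {0..n}"
    then have "{x. x\<in>{k\<in>A. rlen k \<le> n} \<and> rlen x = m} = fib A m" by (auto simp: fib_def)
    then show "(\<Sum>k\<in>{x. x\<in>{k\<in>A. rlen k \<le> n} \<and> rlen x = m}. rsign k * g (rlen k)) = sig A m * g m"
      by (simp add: sig_def sum_distrib_right fib_def)
  qed simp
  finally show ?thesis .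
qed

lemma tlen_Cons[simp]: "tlen (k#t) = rlen k + tlen t" by (simp add: tlen_def)
lemma tlen_Nil[simp]: "tlen [] = 0" by (simp add: tlen_def)
lemma tsign_Cons[simp]: "tsign (k#t) = rsign k * tsign t" by (simp add: tsign_def)
lemma tsign_Nil[simp]: "tsign [] = 1" by (simp add: tsign_def)

lemma tlen_pos: "is_rodset R \<Longrightarrow> t \<in> lists R \<Longrightarrow> t \<noteq> [] \<Longrightarrow> tlen t > 0"
  by (cases t) (auto simp: is_rodset_def)

lemma TT0: "is_rodset R \<Longrightarrow> TT R 0 = {[]}"
  using tlen_pos by (fastforce simp: TT_def)

lemma TT_dec: assumes R: "is_rodset R" and n: "n > 0"
  shows "TT R n = (\<lambda>(k,t). k#t) ` (SIGMA k:{k\<in>R. rlen k \<le> n}. TT R (n - rlen k))"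
proof
  show "TT R n \<subseteq> (\<lambda>(k,t). k#t) ` (SIGMA k:{k\<in>R. rlen k \<le> n}. TT R (n - rlen k))"
  proof
    fix t assume t: "t \<in> TT R n"
    then obtain k t' where "t = k # t'" using n by (cases t) (auto simp: TT_def)
    then show "t \<in> (\<lambda>(k,t). k#t) ` (SIGMA k:{k\<in>R. rlen k \<le> n}. TT R (n - rlen k))"
      using t by (auto simp: TT_def intro!: image_eqI[where x="(k,t')"])
  qed
qed (auto simp: TT_def)

lemma TT_fin: assumes R: "is_rodset R" shows "finite (TT R n)"
proof (induction n rule: less_induct)
  case (less n)
  show ?case
  proof (cases "n = 0")
    case True then show ?thesis using TT0[OF R] by simp
  next
    case False
    have "finite (SIGMA k:{k\<in>R. rlen k \<le> n}. TT R (n - rlen k))"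
    proof (rule finite_SigmaI)
      show "finite {k\<in>R. rlen k \<le> n}" by (rule fin_le[OF R])
      fix k assume "k \<in> {k\<in>R. rlen k \<le> n}"
      then have "n - rlen k < n" using R False by (auto simp: is_rodset_def)
      then show "finite (TT R (n - rlen k))" by (rule less)
    qed
    then show ?thesis using TT_dec[OF R] False by simp
  qed
qed

lemma F_TT: "F (int n) R = (\<Sum>t\<in>TT R n. tsign t)"
  by (simp add: F_def TT_def Trains_def)

lemma F0: "is_rodset R \<Longrightarrow> F 0 R = 1"
  using F_TT[of 0 R] TT0[of R] by simp

lemma F_rec: assumes R: "is_rodset R" and n: "n > 0"
  shows "F (int n) R = (\<Sum>m=0..n. sig R m * F (int (n-m)) R)"
proof -
  let ?K = "{k\<in>R. rlen k \<le> n}"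
  have inj: "inj_on (\<lambda>(k,t). k#t) (SIGMA k:?K. TT R (n - rlen k))" by (auto simp: inj_on_def)
  have "F (int n) R = (\<Sum>p\<in>(SIGMA k:?K. TT R (n - rlen k)). tsign ((\<lambda>(k,t). k#t) p))"
    unfolding F_TT TT_dec[OF R n] by (rule sum.reindex[OF inj, unfolded comp_def])
  also have "\<dots> = (\<Sum>k\<in>?K. \<Sum>t\<in>TT R (n - rlen k). rsign k * tsign t)"
    by (subst sum.Sigma) (auto simp: fin_le[OF R] TT_fin[OF R] split_def)
  also have "\<dots> = (\<Sum>k\<in>?K. rsign k * F (int (n - rlen k)) R)"
    by (rule sum.cong) (simp_all only: F_TT sum_distrib_left)
  also have "\<dots> = (\<Sum>m=0..n. sig R m * F (int (n-m)) R)"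
    by (rule group_len[OF R])
  finally show ?thesis .
qed

lemma Fs_eq: assumes R: "is_rodset R" shows "Fs R = 1 + cf R * Fs R"
proof (rule fps_ext)
  fix n
  show "fps_nth (Fs R) n = fps_nth (1 + cf R * Fs R) n"
  proof (cases "n = 0")
    case True then show ?thesis using F0[OF R] sig0[OF R] by (simp add: Fs_def cf_def fps_mult_nth)
  next
    case False then show ?thesis using F_rec[OF R, of n] by (simp add: Fs_def cf_def fps_mult_nth)
  qed
qed


lemma tsign_pm: "is_rodset R \<Longrightarrow> t \<in> lists R \<Longrightarrow> tsign t = 1 \<or> tsign t = -1"
  by (induction t) (auto simp: is_rodset_def)

lemma fib_train: assumes R: "is_rodset R"
  shows "fib (train_rods R) n = (\<lambda>t. (tlen t, t, tsign t)) ` {t\<in>TT R n. t \<noteq> []}"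
  by (auto simp: fib_def train_rods_def TT_def Trains_def rlen_def)

lemma train_rodset: assumes R: "is_rodset R" shows "is_rodset (train_rods R)"
proof -
  have "\<forall>k\<in>train_rods R. 0 < rlen k \<and> (rsign k = 1 \<or> rsign k = -1)"
  proof
  fix k assume "k \<in> train_rods R"
  then obtain t where "k = (tlen t, t, tsign t)" "t \<in> lists R" "t \<noteq> []"
    by (auto simp: train_rods_def Trains_def)
  then show "0 < rlen k \<and> (rsign k = 1 \<or> rsign k = -1)"
    using tlen_pos[OF R] tsign_pm[OF R] by (auto simp: rlen_def rsign_def)
  qed
  moreover have "\<forall>n. finite {k \<in> train_rods R. rlen k = n}"
  proof
  fix n
  show "finite {k \<in> train_rods R. rlen k = n}"
    using fib_train[OF R, of n] TT_fin[OF R, of n] by (simp add: fib_def)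
  qed
  ultimately show ?thesis unfolding is_rodset_def by blast
qed

lemma sig_train: assumes R: "is_rodset R"
  shows "sig (train_rods R) n = (if n = 0 then 0 else F (int n) R)"
proof (cases "n = 0")
  case True then show ?thesis using sig0[OF train_rodset[OF R]] by simp
next
  case False
  have e: "{t\<in>TT R n. t \<noteq> []} = TT R n" using False by (auto simp: TT_def)
  have inj: "inj_on (\<lambda>t. (tlen t, t, tsign t)) (TT R n)" by (auto simp: inj_on_def)
  show ?thesis using False
    by (simp add: sig_def fib_train[OF R] e sum.reindex[OF inj] F_TT rsign_def)
qed

lemma cf_train: assumes R: "is_rodset R" shows "cf (train_rods R) = Fs R - 1"
  by (rule fps_ext) (simp add: cf_def Fs_def sig_train[OF R] F0[OF R])

lemma fib_union: "fib (rod_union A B) n =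
   (\<lambda>(r,c,e). (r, Inl c, e)) ` fib A n \<union> (\<lambda>(r,c,e). (r, Inr c, e)) ` fib B n"
  by (auto simp: fib_def rod_union_def rlen_def image_iff)

lemma union_rodset: assumes A: "is_rodset A" and B: "is_rodset B" shows "is_rodset (rod_union A B)"
proof -
  have "\<forall>k\<in>rod_union A B. 0 < rlen k \<and> (rsign k = 1 \<or> rsign k = -1)"
  proof
  fix k assume "k \<in> rod_union A B"
  then show "0 < rlen k \<and> (rsign k = 1 \<or> rsign k = -1)"
    using A B by (auto simp: rod_union_def is_rodset_def rlen_def rsign_def)
  qed
  moreover have "\<forall>n. finite {k \<in> rod_union A B. rlen k = n}"
  proof
  fix n
  show "finite {k \<in> rod_union A B. rlen k = n}"
    using fib_union[of A B n] rodset_fin[OF A, of n] rodset_fin[OF B, of n] by (simp add: fib_def)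
  qed
  ultimately show ?thesis unfolding is_rodset_def by blast
qed

lemma sig_union: fixes A :: "'a rod set" and B :: "'b rod set"
  assumes A: "is_rodset A" and B: "is_rodset B"
  shows "sig (rod_union A B) n = sig A n + sig B n"
proof -
  define f1 :: "'a rod \<Rightarrow> ('a+'b) rod" where "f1 = (\<lambda>(r,c,e). (r, Inl c, e))"
  define f2 :: "'b rod \<Rightarrow> ('a+'b) rod" where "f2 = (\<lambda>(r,c,e). (r, Inr c, e))"
  have i1: "inj_on f1 (fib A n)" by (auto simp: inj_on_def f1_def)
  have i2: "inj_on f2 (fib B n)" by (auto simp: inj_on_def f2_def)
  have "sig (rod_union A B) n = sum rsign (f1 ` fib A n) + sum rsign (f2 ` fib B n)"
    unfolding sig_def fib_union f1_def f2_def
    by (subst sum.union_disjoint) (auto simp: rodset_fin[OF A] rodset_fin[OF B])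
  also have "\<dots> = sig A n + sig B n"
    unfolding sum.reindex[OF i1] sum.reindex[OF i2] by (simp add: sig_def rsign_def split_def comp_def f1_def f2_def)
  finally show ?thesis .
qed

lemma cf_union: "is_rodset A \<Longrightarrow> is_rodset B \<Longrightarrow> cf (rod_union A B) = cf A + cf B"
  by (rule fps_ext) (simp add: cf_def sig_union)

lemma fib_bar: "fib (rod_bar A) n = (\<lambda>(r,c,e). (r, c, -e)) ` fib A n"
  by (auto simp: fib_def rod_bar_def rlen_def image_iff)

lemma bar_rodset: assumes A: "is_rodset A" shows "is_rodset (rod_bar A)"
proof -
  have "\<forall>k\<in>rod_bar A. 0 < rlen k \<and> (rsign k = 1 \<or> rsign k = -1)"
  proof
  fix k assume "k \<in> rod_bar A"
  then show "0 < rlen k \<and> (rsign k = 1 \<or> rsign k = -1)"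
    using A by (auto simp: rod_bar_def is_rodset_def rlen_def rsign_def)
  qed
  moreover have "\<forall>n. finite {k \<in> rod_bar A. rlen k = n}"
  proof
  fix n
  show "finite {k \<in> rod_bar A. rlen k = n}"
    using fib_bar[of A n] rodset_fin[OF A, of n] by (simp add: fib_def)
  qed
  ultimately show ?thesis unfolding is_rodset_def by blast
qed

lemma cf_bar: "cf (rod_bar A) = - cf A"
proof (rule fps_ext)
  fix n
  have i1: "inj_on (\<lambda>(r,c,e). (r, c, - e)) (fib A n)" by (auto simp: inj_on_def)
  have "sig (rod_bar A) n = - sig A n"
    unfolding sig_def fib_bar sum.reindex[OF i1] by (simp add: rsign_def split_def sum_negf comp_def)
  then show "fps_nth (cf (rod_bar A)) n = fps_nth (- cf A) n" by (simp add: cf_def)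
qed

lemma fib_prod: "fib (rod_prod A B) n = (\<lambda>(q,r). (rlen q + rlen r, (q,r), rsign q * rsign r)) `
    (SIGMA q:{q\<in>A. rlen q \<le> n}. fib B (n - rlen q))"
  by (force simp: fib_def rod_prod_def rlen_def image_iff)

lemma pm_mult: "(a::int) = 1 \<or> a = -1 \<Longrightarrow> b = 1 \<or> b = -1 \<Longrightarrow> a*b = 1 \<or> a*b = -1"
  by auto

lemma prod_rodset: assumes A: "is_rodset A" and B: "is_rodset B" shows "is_rodset (rod_prod A B)"
proof -
  have "\<forall>k\<in>rod_prod A B. 0 < rlen k \<and> (rsign k = 1 \<or> rsign k = -1)"
  proof
  fix k assume "k \<in> rod_prod A B"
  then obtain q r where k: "k = (rlen q + rlen r, (q,r), rsign q * rsign r)" "q\<in>A" "r\<in>B"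
    by (auto simp: rod_prod_def)
  have "rsign k = rsign q * rsign r" "rlen k = rlen q + rlen r" using k by (simp_all add: rsign_def rlen_def)
  then show "0 < rlen k \<and> (rsign k = 1 \<or> rsign k = -1)"
    using A B k pm_mult[of "rsign q" "rsign r"] by (auto simp: is_rodset_def)
  qed
  moreover have "\<forall>n. finite {k \<in> rod_prod A B. rlen k = n}"
  proof
  fix n
  have "finite (SIGMA q:{q\<in>A. rlen q \<le> n}. fib B (n - rlen q))"
    using fin_le[OF A] rodset_fin[OF B] by auto
  then show "finite {k \<in> rod_prod A B. rlen k = n}"
    using fib_prod[of A B n] by (simp add: fib_def)
  qed
  ultimately show ?thesis unfolding is_rodset_def by blast
qed

lemma cf_prod: assumes A: "is_rodset A" and B: "is_rodset B" shows "cf (rod_prod A B) = cf A * cf B"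
proof (rule fps_ext)
  fix n
  let ?S = "SIGMA q:{q\<in>A. rlen q \<le> n}. fib B (n - rlen q)"
  have i1: "inj_on (\<lambda>(q,r). (rlen q + rlen r, (q,r), rsign q * rsign r)) ?S" by (auto simp: inj_on_def)
  have "sig (rod_prod A B) n = (\<Sum>(q,r)\<in>?S. rsign q * rsign r)"
    unfolding sig_def fib_prod sum.reindex[OF i1] by (simp add: rsign_def case_prod_beta comp_def)
  also have "\<dots> = (\<Sum>q\<in>{q\<in>A. rlen q \<le> n}. \<Sum>r\<in>fib B (n - rlen q). rsign q * rsign r)"
    by (subst sum.Sigma) (auto simp: fin_le[OF A] rodset_fin[OF B])
  also have "\<dots> = (\<Sum>q\<in>{q\<in>A. rlen q \<le> n}. rsign q * sig B (n - rlen q))"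
    by (simp add: sig_def sum_distrib_left)
  also have "\<dots> = (\<Sum>m=0..n. sig A m * sig B (n - m))" by (rule group_len[OF A])
  finally show "fps_nth (cf (rod_prod A B)) n = fps_nth (cf A * cf B) n"
    by (simp add: cf_def fps_mult_nth)
qed

lemma equiv_cf: assumes A: "is_rodset A" and B: "is_rodset B"
  shows "rod_equiv A B \<longleftrightarrow> cf A = cf B"
proof
  assume "rod_equiv A B"
  then show "cf A = cf B"
  proof (intro fps_ext)
    fix n show "fps_nth (cf A) n = fps_nth (cf B) n"
      using \<open>rod_equiv A B\<close> sig0[OF A] sig0[OF B]
      by (cases "n = 0") (auto simp: cf_def rod_equiv_def C_sig[OF A] C_sig[OF B])
  qed
next
  assume "cf A = cf B"
  then have "\<And>n. fps_nth (cf A) n = fps_nth (cf B) n" by simp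
  then have "sig A = sig B" by (simp add: cf_def fun_eq_iff)
  then show "rod_equiv A B" by (simp add: rod_equiv_def C_sig[OF A] C_sig[OF B])
qed


lemma alg:
  fixes a b r s q :: "'x::comm_ring_1"
  assumes ha: "a * (1 - r) = 1" and hb: "b * (1 - s) = 1"
  shows "(s = r + - q + q * r \<longleftrightarrow> a * (1 - s) = 1 + q)
       \<and> (s = r + - q + q * r \<longleftrightarrow> a = b * (1 + q))"
proof -
  have e0: "s = r + - q + q * r \<longleftrightarrow> 1 - s = (1 + q) * (1 - r)"
    by (auto simp: algebra_simps)
  have e1: "1 - s = (1 + q) * (1 - r) \<longleftrightarrow> a * (1 - s) = 1 + q"
  proof
    assume "1 - s = (1 + q) * (1 - r)"
    then have "a * (1 - s) = (1 + q) * (a * (1 - r))" by (simp add: algebra_simps)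
    then show "a * (1 - s) = 1 + q" using ha by simp
  next
    assume h: "a * (1 - s) = 1 + q"
    have "1 - s = (a * (1 - r)) * (1 - s)" using ha by simp
    also have "\<dots> = (a * (1 - s)) * (1 - r)" by (simp add: algebra_simps)
    finally show "1 - s = (1 + q) * (1 - r)" using h by simp
  qed
  have e2: "1 - s = (1 + q) * (1 - r) \<longleftrightarrow> a = b * (1 + q)"
  proof
    assume h: "1 - s = (1 + q) * (1 - r)"
    have "a = a * (b * (1 - s))" using hb by simp
    also have "\<dots> = b * (1 + q) * (a * (1 - r))" unfolding h by (simp add: algebra_simps)
    finally show "a = b * (1 + q)" using ha by simp
  next
    assume h: "a = b * (1 + q)"
    have "1 - s = (a * (1 - r)) * (1 - s)" using ha by simp
    also have "\<dots> = (b * (1 - s)) * (1 + q) * (1 - r)" using h by (simp add: algebra_simps)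
    finally show "1 - s = (1 + q) * (1 - r)" using hb by simp
  qed
  show ?thesis using e0 e1 e2 by blast
qed

lemma Fs_inv: "is_rodset R \<Longrightarrow> Fs R * (1 - cf R) = 1"
  using Fs_eq[of R] by (simp add: algebra_simps)

lemma fps_eq_pos: "fps_nth f 0 = fps_nth g 0 \<Longrightarrow> (\<forall>n>0. fps_nth f n = fps_nth g n) \<longleftrightarrow> f = g"
  by (metis fps_ext gr0I)

theorem mainTheorem8:
  fixes R :: "'a rod set" and Q :: "'b rod set" and S :: "'c rod set"
  assumes "is_rodset R" and "is_rodset Q" and "is_rodset S"
  shows "(rod_arrow R Q S \<longleftrightarrow> (\<forall>n>0. D n R S = C n Q))
       \<and> (rod_arrow R Q S \<longleftrightarrow>
            rod_equiv (train_rods R)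
              (rod_union (rod_union (train_rods S) Q) (rod_prod (train_rods S) Q)))
       \<and> (rod_arrow R Q S \<longleftrightarrow>
            (\<forall>n>0. F (int n) R = F (int n) S
                 + (\<Sum>q\<in>{q\<in>Q. rlen q \<le> n}. rsign q * F (int n - int (rlen q)) S)))"
proof -
  note R = assms(1) and Q = assms(2) and S = assms(3)
  have A: "Fs R * (1 - cf R) = 1" "Fs S * (1 - cf S) = 1" using Fs_inv R S by auto
  note al = alg[OF A, of "cf Q"]
  have c1: "rod_arrow R Q S \<longleftrightarrow> cf S = cf R + - cf Q + cf Q * cf R"
    unfolding rod_arrow_def
    by (subst equiv_cf) (auto intro!: union_rodset prod_rodset bar_rodset simp: R Q S
        cf_union union_rodset bar_rodset prod_rodset cf_bar cf_prod)
  have sh: "(\<Sum>m=0..n. sig A m * F (int n - int m) X) = fps_nth (cf A * Fs X) n" for A :: "'d rod set" and X :: "'e rod set" and n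
    by (simp add: fps_mult_nth Fs_def cf_def of_nat_diff)
  have c2: "(\<forall>n>0. D n R S = C n Q) \<longleftrightarrow> Fs R * (1 - cf S) = 1 + cf Q"
  proof -
    have "D n R S = fps_nth (Fs R * (1 - cf S)) n" for n
      unfolding D_def group_len[OF S, of "\<lambda>m. F (int n - int m) R" n] sh
      by (simp add: algebra_simps Fs_def)
    moreover have "n > 0 \<Longrightarrow> C n Q = fps_nth (1 + cf Q) n" for n
      by (simp add: C_sig[OF Q] cf_def)
    moreover have "fps_nth (Fs R * (1 - cf S)) 0 = fps_nth (1 + cf Q) 0"
      using F0[OF R] sig0[OF S] sig0[OF Q] by (simp add: Fs_def cf_def)
    ultimately show ?thesis using fps_eq_pos by (metis (no_types, lifting))
  qed
  have c3: "rod_equiv (train_rods R)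
              (rod_union (rod_union (train_rods S) Q) (rod_prod (train_rods S) Q))
        \<longleftrightarrow> Fs R = Fs S * (1 + cf Q)"
  proof -
    have "rod_equiv (train_rods R)
              (rod_union (rod_union (train_rods S) Q) (rod_prod (train_rods S) Q))
        \<longleftrightarrow> Fs R - 1 = ((Fs S - 1) + cf Q) + (Fs S - 1) * cf Q"
      using train_rodset[OF R] train_rodset[OF S] Q
      by (subst equiv_cf) (auto intro!: union_rodset prod_rodset
        simp: cf_union union_rodset prod_rodset cf_prod cf_train R S)
    also have "\<dots> \<longleftrightarrow> Fs R = Fs S * (1 + cf Q)"
      by (auto simp: algebra_simps)
    finally show ?thesis .
  qed
  have c4: "(\<forall>n>0. F (int n) R = F (int n) S
                 + (\<Sum>q\<in>{q\<in>Q. rlen q \<le> n}. rsign q * F (int n - int (rlen q)) S))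
        \<longleftrightarrow> Fs R = Fs S * (1 + cf Q)"
  proof -
    have "F (int n) S + (\<Sum>q\<in>{q\<in>Q. rlen q \<le> n}. rsign q * F (int n - int (rlen q)) S)
         = fps_nth (Fs S * (1 + cf Q)) n" for n
      unfolding group_len[OF Q, of "\<lambda>m. F (int n - int m) S" n] sh
      by (simp add: algebra_simps Fs_def)
    moreover have "F (int n) R = fps_nth (Fs R) n" for n by (simp add: Fs_def)
    moreover have "fps_nth (Fs R) 0 = fps_nth (Fs S * (1 + cf Q)) 0"
      using F0[OF R] F0[OF S] sig0[OF Q] by (simp add: Fs_def cf_def)
    ultimately show ?thesis using fps_eq_pos by (metis (no_types, lifting))
  qed
  show ?thesis using c1 c2 c3 c4 al by blast
qed

end
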